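(* For every infinite computable set $R\subseteq\mathbb N$, the sequence $\Omega_R$ is captured by a $\mathbf c_{\Omega,R}$-bounded test.
   Context: $\Omega$ is a fixed left-c.e. ML-random real, viewed also as an infinite binary sequence, with a computable increasing sequence of rationals $\Omega_s\to\Omega$ (here $\Omega_s$ for a number $s$ denotes the approximation). For an infinite set $R$, $\Omega_R$ is the sequence obtained from $\Omega$ by deleting the bits at positions outside $R$ (its $m$-th bit is $\Omega(p_R(m))$, $p_R(m)$ the $m$-th element of $R$). Let $k_s(n)=\lfloor-\log_2(\Omega_s-\Omega_n)\rfloor$ and $k(n)=\lfloor-\log_2(\Omega-\Omega_n)\rfloor$. Define $\mathbf c_{\Omega,R}(n,s)=2^{-|R\cap k_s(n)|}$ (where $R\cap m=R\cap\{0,\dots,m-1\}$), a monotonic cost function with limit $\underline{\mathbf c}_{\Omega,R}(n)=2^{-|R\cap k(n)|}$. A $\mathbf c$-bounded test is a nested sequence of uniformly c.e. open sets $V_n\subseteq 2^\omega$ with $\mu(V_n)\le C\,\underline{\mathbf c}(n)$ for some constant $C$; it captures the elements of $\bigcap_nV_n$. *)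

theory Defs
  imports "HOL-Probability.Probability" "HOL-Library.Nat_Bijection"
begin

datatype recf = Zero | Succ | Proj nat | Comp recf "recf list" | Prec recf recf | Mn recf

inductive eval_recf :: "recf \<Rightarrow> nat list \<Rightarrow> nat \<Rightarrow> bool" where
  ev_zero: "eval_recf Zero xs 0"
| ev_succ: "eval_recf Succ (x # xs) (Suc x)"
| ev_proj: "i < length xs \<Longrightarrow> eval_recf (Proj i) xs (xs ! i)"
| ev_comp: "length ys = length gs \<Longrightarrow> (\<forall>i<length gs. eval_recf (gs ! i) xs (ys ! i))
            \<Longrightarrow> eval_recf f ys z \<Longrightarrow> eval_recf (Comp f gs) xs z"
| ev_prec0: "eval_recf f xs z \<Longrightarrow> eval_recf (Prec f g) (0 # xs) z"
| ev_precS: "eval_recf (Prec f g) (n # xs) y \<Longrightarrow> eval_recf g (y # n # xs) z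
            \<Longrightarrow> eval_recf (Prec f g) (Suc n # xs) z"
| ev_mn: "eval_recf f (n # xs) 0 \<Longrightarrow> (\<forall>m<n. \<exists>y. eval_recf f (m # xs) y \<and> y \<noteq> 0)
            \<Longrightarrow> eval_recf (Mn f) xs n"

definition computable_fun :: "(nat \<Rightarrow> nat) \<Rightarrow> bool" where
  "computable_fun f \<longleftrightarrow> (\<exists>p. \<forall>n. eval_recf p [n] (f n))"

definition computable_set :: "nat set \<Rightarrow> bool" where
  "computable_set R \<longleftrightarrow> computable_fun (\<lambda>n. if n \<in> R then 1 else 0)"

definition ce_set :: "nat set \<Rightarrow> bool" where
  "ce_set A \<longleftrightarrow> (\<exists>p. \<forall>x. x \<in> A \<longleftrightarrow> (\<exists>y. eval_recf p [x] y))"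

definition computable_rat_seq :: "(nat \<Rightarrow> real) \<Rightarrow> bool" where
  "computable_rat_seq q \<longleftrightarrow> (\<exists>a d. computable_fun a \<and> computable_fun d \<and>
      (\<forall>s. q s = real_of_int (int_decode (a s)) / real (Suc (d s))))"

definition code_str :: "bool list \<Rightarrow> nat" where
  "code_str \<sigma> = list_encode (map (\<lambda>b. if b then 1 else 0) \<sigma>)"

definition cylinder :: "bool list \<Rightarrow> (nat \<Rightarrow> bool) set" where
  "cylinder \<sigma> = {X. \<forall>i<length \<sigma>. X i = \<sigma> ! i}"

definition cantor_measure :: "(nat \<Rightarrow> bool) measure" where
  "cantor_measure = PiM UNIV (\<lambda>_::nat. measure_pmf (bernoulli_pmf (1/2)))"

definition unif_ce_open :: "(nat \<Rightarrow> (nat \<Rightarrow> bool) set) \<Rightarrow> bool" where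
  "unif_ce_open V \<longleftrightarrow> (\<exists>W. ce_set W \<and>
      (\<forall>n. V n = \<Union> {cylinder \<sigma> | \<sigma>. prod_encode (n, code_str \<sigma>) \<in> W}))"

definition ml_random :: "(nat \<Rightarrow> bool) \<Rightarrow> bool" where
  "ml_random X \<longleftrightarrow> \<not> (\<exists>U. unif_ce_open U \<and>
      (\<forall>n. emeasure cantor_measure (U n) \<le> ennreal ((1/2) ^ n)) \<and> X \<in> (\<Inter>n. U n))"

text \<open>Binary expansion of a real in (0,1): bit i is the (i+1)-th digit after the point.\<close>
definition real_bits :: "real \<Rightarrow> nat \<Rightarrow> bool" where
  "real_bits x i = odd \<lfloor>x * 2 ^ Suc i\<rfloor>"

text \<open>Omega_R: delete the bits outside R; the m-th bit is X (p_R m).\<close>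
definition restrict_seq :: "nat set \<Rightarrow> (nat \<Rightarrow> bool) \<Rightarrow> nat \<Rightarrow> bool" where
  "restrict_seq R X m = X (Infinite_Set.enumerate R m)"

definition k_stage :: "(nat \<Rightarrow> real) \<Rightarrow> nat \<Rightarrow> nat \<Rightarrow> nat" where
  "k_stage Om n s = nat \<lfloor>- log 2 (Om s - Om n)\<rfloor>"

definition k_lim :: "real \<Rightarrow> (nat \<Rightarrow> real) \<Rightarrow> nat \<Rightarrow> nat" where
  "k_lim \<Omega> Om n = nat \<lfloor>- log 2 (\<Omega> - Om n)\<rfloor>"

definition cost_OR :: "(nat \<Rightarrow> real) \<Rightarrow> nat set \<Rightarrow> nat \<Rightarrow> nat \<Rightarrow> real" where
  "cost_OR Om R n s = (1/2) ^ card (R \<inter> {..<k_stage Om n s})"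

definition cost_lim :: "real \<Rightarrow> (nat \<Rightarrow> real) \<Rightarrow> nat set \<Rightarrow> nat \<Rightarrow> real" where
  "cost_lim \<Omega> Om R n = (1/2) ^ card (R \<inter> {..<k_lim \<Omega> Om n})"

definition bounded_test :: "(nat \<Rightarrow> real) \<Rightarrow> (nat \<Rightarrow> (nat \<Rightarrow> bool) set) \<Rightarrow> bool" where
  "bounded_test c V \<longleftrightarrow> unif_ce_open V \<and> decseq V \<and>
      (\<exists>C. \<forall>n. emeasure cantor_measure (V n) \<le> ennreal (C * c n))"

definition captured_by :: "(nat \<Rightarrow> bool) \<Rightarrow> (nat \<Rightarrow> (nat \<Rightarrow> bool) set) \<Rightarrow> bool" where
  "captured_by X V \<longleftrightarrow> X \<in> (\<Inter>n. V n)"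

end

theory Submission
  imports Defs
begin


lemma eval_det: "eval_recf p xs y \<Longrightarrow> eval_recf p xs z \<Longrightarrow> y = z"
proof (induction arbitrary: z rule: eval_recf.induct)
  case (ev_zero xs) from ev_zero.prems show ?case by (cases rule: eval_recf.cases) auto
next
  case (ev_succ x xs) from ev_succ.prems show ?case by (cases rule: eval_recf.cases) auto
next
  case (ev_proj i xs) from ev_proj.prems show ?case by (cases rule: eval_recf.cases) auto
next
  case (ev_comp ys gs xs f z0)
  from ev_comp.prems show ?case
  proof (cases rule: eval_recf.cases)
    case (ev_comp ys')
    have "ys = ys'"
      using ev_comp ev_comp.IH
      by (metis (no_types, lifting) \<open>length ys = length gs\<close> \<open>\<forall>i<length gs. eval_recf (gs ! i) xs (ys ! i) \<and> (\<forall>x. eval_recf (gs ! i) xs x \<longrightarrow> ys ! i = x)\<close> nth_equalityI)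
    then show ?thesis using ev_comp ev_comp.IH by auto
  qed
next
  case (ev_prec0 f xs z0 g)
  from ev_prec0.prems show ?case by (cases rule: eval_recf.cases) (auto simp: ev_prec0.IH)
next
  case (ev_precS f g n xs y z0)
  from ev_precS.prems show ?case
    by (cases rule: eval_recf.cases) (auto dest: ev_precS.IH)
next
  case (ev_mn f n xs)
  from ev_mn.prems show ?case
  proof (cases rule: eval_recf.cases)
    case (ev_mn)
    show ?thesis
    proof (rule ccontr)
      assume "n \<noteq> z"
      then consider "n < z" | "z < n" by linarith
      then show False
      proof cases
        case 1
        with ev_mn obtain y where "eval_recf f (n # xs) y" "y \<noteq> 0" by blast
        with ev_mn.IH(1) show False by auto
      next
        case 2
        with ev_mn.IH(2) obtain y where "eval_recf f (z # xs) y" "y \<noteq> 0"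
          "\<forall>w. eval_recf f (z # xs) w \<longrightarrow> y = w" by blast
        with ev_mn show False by auto
      qed
    qed
  qed
qed




datatype ex = Zr | Sc ex | Vr nat | Fo nat ex | Pr ex ex ex

definition econs :: "nat \<Rightarrow> (nat \<Rightarrow> nat) \<Rightarrow> nat \<Rightarrow> nat" (infixr "##" 65) where
  "econs a e = (\<lambda>i. case i of 0 \<Rightarrow> a | Suc j \<Rightarrow> e j)"

lemma econs_0[simp]: "(a ## e) 0 = a" and econs_Suc[simp]: "(a ## e) (Suc j) = e j"
  by (auto simp: econs_def)

lemma econs_numeral[simp]: "(a ## e) (numeral k) = e (pred_numeral k)"
  by (simp add: numeral_eq_Suc)

fun ev :: "(nat \<Rightarrow> nat \<Rightarrow> nat) \<Rightarrow> ex \<Rightarrow> (nat \<Rightarrow> nat) \<Rightarrow> nat" where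
  "ev fs Zr e = 0"
| "ev fs (Sc a) e = Suc (ev fs a e)"
| "ev fs (Vr i) e = e i"
| "ev fs (Fo j a) e = fs j (ev fs a e)"
| "ev fs (Pr b s m) e = rec_nat (ev fs b e) (\<lambda>k r. ev fs s (r ## k ## e)) (ev fs m e)"

fun wf :: "nat \<Rightarrow> ex \<Rightarrow> bool" where
  "wf n Zr = True"
| "wf n (Sc a) = wf n a"
| "wf n (Vr i) = (i < n)"
| "wf n (Fo j a) = wf n a"
| "wf n (Pr b s m) = (wf n b \<and> wf (Suc (Suc n)) s \<and> wf n m)"

fun cmp :: "(nat \<Rightarrow> recf) \<Rightarrow> nat \<Rightarrow> ex \<Rightarrow> recf" where
  "cmp P n Zr = Zero"
| "cmp P n (Sc a) = Comp Succ [cmp P n a]"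
| "cmp P n (Vr i) = Proj i"
| "cmp P n (Fo j a) = Comp (P j) [cmp P n a]"
| "cmp P n (Pr b s m) = Comp (Prec (cmp P n b) (cmp P (Suc (Suc n)) s)) (cmp P n m # map Proj [0..<n])"

lemma nth_econs: "(\<lambda>i. (a # xs) ! i) = a ## (\<lambda>i. xs ! i)"
  by (rule ext) (auto simp: econs_def split: nat.splits)

lemma eval_prec:
  assumes f: "eval_recf pf xs b"
    and g: "\<And>k r. eval_recf pg (r # k # xs) (st k r)"
  shows "eval_recf (Prec pf pg) (m # xs) (rec_nat b st m)"
proof (induction m)
  case 0 then show ?case using f by (simp add: ev_prec0)
next
  case (Suc m) then show ?case using g by (auto intro: ev_precS)
qed

lemma eval_proj_list: "length xs = n \<Longrightarrow> \<forall>i<length (map Proj [0..<n]). eval_recf (map Proj [0..<n] ! i) xs (xs ! i)"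
  by (auto intro: ev_proj)

lemma cmp_correct:
  assumes P: "\<And>j x. eval_recf (P j) [x] (fs j x)"
  shows "wf n e \<Longrightarrow> length xs = n \<Longrightarrow> eval_recf (cmp P n e) xs (ev fs e (\<lambda>i. xs ! i))"
proof (induction e arbitrary: n xs)
  case Zr then show ?case by (auto intro: ev_zero)
next
  case (Sc a)
  have "eval_recf Succ [ev fs a (\<lambda>i. xs ! i)] (Suc (ev fs a (\<lambda>i. xs ! i)))" by (rule ev_succ)
  then show ?case using Sc by (auto intro!: ev_comp[where ys="[ev fs a (\<lambda>i. xs ! i)]"])
next
  case (Vr i) then show ?case by (auto intro: ev_proj)
next
  case (Fo j a)
  then show ?case using P by (auto intro!: ev_comp[where ys="[ev fs a (\<lambda>i. xs ! i)]"])
next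
  case (Pr b s m)
  let ?mv = "ev fs m (\<lambda>i. xs ! i)"
  have pr: "eval_recf (Prec (cmp P n b) (cmp P (Suc (Suc n)) s)) (?mv # xs)
     (rec_nat (ev fs b (\<lambda>i. xs ! i)) (\<lambda>k r. ev fs s (r ## k ## (\<lambda>i. xs ! i))) ?mv)"
  proof (rule eval_prec)
    show "eval_recf (cmp P n b) xs (ev fs b (\<lambda>i. xs ! i))" using Pr by auto
    fix k r
    have "eval_recf (cmp P (Suc (Suc n)) s) (r # k # xs) (ev fs s (\<lambda>i. (r # k # xs) ! i))"
      using Pr by auto
    then show "eval_recf (cmp P (Suc (Suc n)) s) (r # k # xs) (ev fs s (r ## k ## (\<lambda>i. xs ! i)))"
      by (simp add: nth_econs)
  qed
  have m: "eval_recf (cmp P n m) xs ?mv" using Pr by auto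
  show ?case
    apply simp
    apply (rule ev_comp[where ys="?mv # xs"])
    using m Pr.prems(2) pr by (auto simp: nth_Cons' intro: ev_proj)
qed

lemma ev_cong: "wf n e \<Longrightarrow> (\<And>i. i < n \<Longrightarrow> e1 i = e2 i) \<Longrightarrow> ev fs e e1 = ev fs e e2"
proof (induction e arbitrary: n e1 e2)
  case (Pr b s m)
  have b: "ev fs b e1 = ev fs b e2" using Pr.IH(1)[of n e1 e2] Pr.prems by simp
  have m: "ev fs m e1 = ev fs m e2" using Pr.IH(3)[of n e1 e2] Pr.prems by simp
  have s: "\<And>k r. ev fs s (r ## k ## e1) = ev fs s (r ## k ## e2)"
  proof -
    fix k r
    have "\<And>i. i < Suc (Suc n) \<Longrightarrow> (r ## k ## e1) i = (r ## k ## e2) i"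
      using Pr.prems(2) by (auto simp: econs_def split: nat.splits)
    then show "ev fs s (r ## k ## e1) = ev fs s (r ## k ## e2)"
      using Pr.IH(2)[of "Suc (Suc n)" "r ## k ## e1" "r ## k ## e2"] Pr.prems(1) by simp
  qed
  show ?case by (simp add: b m s)
next
  case (Sc a) then show ?case by (metis ev.simps(2) wf.simps(2))
next
  case (Fo j a) then show ?case by (metis ev.simps(4) wf.simps(4))
next
  case Zr then show ?case by simp
next
  case (Vr i) then show ?case by simp
qed

lemma ce_from_ex:
  assumes P: "\<And>j. computable_fun (fs j)" and w: "wf 2 e"
  shows "ce_set {x. \<exists>y. ev fs e (y ## x ## (\<lambda>_. 0)) = 0}"
proof -
  obtain P where P: "\<And>j x. eval_recf (P j) [x] (fs j x)"
    using P unfolding computable_fun_def by metis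
  have C: "\<And>y x. eval_recf (cmp P 2 e) [y, x] (ev fs e (y ## x ## (\<lambda>_. 0)))"
  proof -
    fix y x
    have "eval_recf (cmp P 2 e) [y, x] (ev fs e (\<lambda>i. [y, x] ! i))"
      using cmp_correct[OF P w] by auto
    moreover have "ev fs e (\<lambda>i. [y, x] ! i) = ev fs e (y ## x ## (\<lambda>_. 0))"
      by (rule ev_cong[OF w]) (auto simp: econs_def less_2_cases_iff split: nat.splits)
    ultimately show "eval_recf (cmp P 2 e) [y, x] (ev fs e (y ## x ## (\<lambda>_. 0)))" by simp
  qed
  show ?thesis unfolding ce_set_def
  proof (intro exI[of _ "Mn (cmp P 2 e)"] allI iffI)
    fix x assume "x \<in> {x. \<exists>y. ev fs e (y ## x ## (\<lambda>_. 0)) = 0}"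
    then obtain y where y: "ev fs e (y ## x ## (\<lambda>_. 0)) = 0" by auto
    define y0 where "y0 = (LEAST y. ev fs e (y ## x ## (\<lambda>_. 0)) = 0)"
    have "ev fs e (y0 ## x ## (\<lambda>_. 0)) = 0" unfolding y0_def by (rule LeastI[of _ y]) (rule y)
    moreover have "\<forall>m<y0. ev fs e (m ## x ## (\<lambda>_. 0)) \<noteq> 0"
      unfolding y0_def using not_less_Least by blast
    ultimately have "eval_recf (Mn (cmp P 2 e)) [x] y0"
      using C by (intro ev_mn) (metis, metis)
    then show "\<exists>y. eval_recf (Mn (cmp P 2 e)) [x] y" by blast
  next
    fix x assume "\<exists>y. eval_recf (Mn (cmp P 2 e)) [x] y"
    then obtain y where "eval_recf (Mn (cmp P 2 e)) [x] y" by blast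
    then have "eval_recf (cmp P 2 e) [y, x] 0" by (cases rule: eval_recf.cases) auto
    with C eval_det have "ev fs e (y ## x ## (\<lambda>_. 0)) = 0" by metis
    then show "x \<in> {x. \<exists>y. ev fs e (y ## x ## (\<lambda>_. 0)) = 0}" by blast
  qed
qed




definition lift2 :: "(nat \<Rightarrow> nat) \<Rightarrow> nat \<Rightarrow> nat" where
  "lift2 f i = (if i < 2 then i else f (i - 2) + 2)"

fun ren :: "(nat \<Rightarrow> nat) \<Rightarrow> ex \<Rightarrow> ex" where
  "ren f Zr = Zr" | "ren f (Sc a) = Sc (ren f a)" | "ren f (Vr i) = Vr (f i)" | "ren f (Fo j a) = Fo j (ren f a)"
| "ren f (Pr b s m) = Pr (ren f b) (ren (lift2 f) s) (ren f m)"

lemma econs_lift2: "(\<lambda>a. (r ## k ## e) (lift2 f a)) = r ## k ## (\<lambda>a. e (f a))"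
  by (rule ext) (auto simp: lift2_def econs_def split: nat.splits)

lemma ev_ren: "ev fs (ren f a) e = ev fs a (e \<circ> f)"
proof (induction a arbitrary: f e)
  case (Pr b s m) then show ?case by (simp add: econs_lift2 comp_def)
qed auto

lemma wf_ren: "wf m a \<Longrightarrow> (\<And>i. i < m \<Longrightarrow> f i < n) \<Longrightarrow> wf n (ren f a)"
proof (induction a arbitrary: f m n)
  case (Pr b s m')
  have "wf (Suc (Suc n)) (ren (lift2 f) s)"
    apply (rule Pr.IH(2)[where m="Suc (Suc m)"]) using Pr.prems by (auto simp: lift2_def)
  then show ?case using Pr by auto
qed auto

definition up2 :: "ex \<Rightarrow> ex" where "up2 a = ren (\<lambda>i. i + 2) a"
lemma ev_up2[simp]: "ev fs (up2 a) (r ## k ## e) = ev fs a e"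
  unfolding up2_def ev_ren by (simp add: comp_def)
lemma wf_up2[simp]: "wf n a \<Longrightarrow> wf (Suc (Suc n)) (up2 a)"
  unfolding up2_def by (erule wf_ren) simp

definition add :: "ex \<Rightarrow> ex \<Rightarrow> ex" where "add a b = Pr a (Sc (Vr 0)) b"
lemma ev_add[simp]: "ev fs (add a b) e = ev fs a e + ev fs b e"
proof -
  have "\<And>y. rec_nat x (\<lambda>k r. Suc r) y = x + y" for x :: nat by (induct_tac y) auto
  then show ?thesis unfolding add_def by simp
qed
lemma wf_add[simp]: "wf n a \<Longrightarrow> wf n b \<Longrightarrow> wf n (add a b)" unfolding add_def by simp

definition pred :: "ex \<Rightarrow> ex" where "pred a = Pr Zr (Vr 1) a"
lemma ev_pred[simp]: "ev fs (pred a) e = ev fs a e - 1"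
proof -
  have "\<And>y::nat. rec_nat 0 (\<lambda>k r. k) y = y - 1" by (induct_tac y) auto
  then show ?thesis unfolding pred_def by simp
qed
lemma wf_pred[simp]: "wf n a \<Longrightarrow> wf n (pred a)" unfolding pred_def by simp

definition sub :: "ex \<Rightarrow> ex \<Rightarrow> ex" where "sub a b = Pr a (pred (Vr 0)) b"
lemma ev_sub[simp]: "ev fs (sub a b) e = ev fs a e - ev fs b e"
proof -
  have "\<And>y. rec_nat x (\<lambda>k r. r - 1) y = x - y" for x :: nat by (induct_tac y) auto
  then show ?thesis unfolding sub_def by simp
qed
lemma wf_sub[simp]: "wf n a \<Longrightarrow> wf n b \<Longrightarrow> wf n (sub a b)" unfolding sub_def by simp

definition mul :: "ex \<Rightarrow> ex \<Rightarrow> ex" where "mul a b = Pr Zr (add (Vr 0) (up2 a)) b"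
lemma ev_mul[simp]: "ev fs (mul a b) e = ev fs a e * ev fs b e"
proof -
  have "\<And>y. rec_nat 0 (\<lambda>k r. r + x) y = x * y" for x :: nat by (induct_tac y) auto
  then show ?thesis unfolding mul_def by simp
qed
lemma wf_mul[simp]: "wf n a \<Longrightarrow> wf n b \<Longrightarrow> wf n (mul a b)" unfolding mul_def by simp

definition pw2 :: "ex \<Rightarrow> ex" where "pw2 a = Pr (Sc Zr) (add (Vr 0) (Vr 0)) a"
lemma ev_pw2[simp]: "ev fs (pw2 a) e = 2 ^ ev fs a e"
proof -
  have "\<And>y::nat. rec_nat 1 (\<lambda>k r. r + r) y = (2::nat) ^ y" by (induct_tac y) auto
  then show ?thesis unfolding pw2_def by simp
qed
lemma wf_pw2[simp]: "wf n a \<Longrightarrow> wf n (pw2 a)" unfolding pw2_def by simp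

definition sg :: "ex \<Rightarrow> ex" where "sg a = Pr Zr (Sc Zr) a"
lemma ev_sg[simp]: "ev fs (sg a) e = (if ev fs a e = 0 then 0 else 1)"
proof -
  have "\<And>y::nat. rec_nat 0 (\<lambda>k r. 1) y = (if y = 0 then 0 else (1::nat))" by (case_tac y) auto
  then show ?thesis unfolding sg_def by (simp del: rec_nat_Suc_imp)
qed
lemma wf_sg[simp]: "wf n a \<Longrightarrow> wf n (sg a)" unfolding sg_def by simp

definition nsg :: "ex \<Rightarrow> ex" where "nsg a = sub (Sc Zr) (sg a)"
lemma ev_nsg[simp]: "ev fs (nsg a) e = (if ev fs a e = 0 then 1 else 0)"
  unfolding nsg_def by simp
lemma wf_nsg[simp]: "wf n a \<Longrightarrow> wf n (nsg a)" unfolding nsg_def by simp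

abbreviation bo :: "bool \<Rightarrow> nat" where "bo p \<equiv> (if p then 1 else 0)"

definition eqE :: "ex \<Rightarrow> ex \<Rightarrow> ex" where "eqE a b = nsg (add (sub a b) (sub b a))"
lemma ev_eqE[simp]: "ev fs (eqE a b) e = bo (ev fs a e = ev fs b e)"
  unfolding eqE_def by simp
lemma wf_eqE[simp]: "wf n a \<Longrightarrow> wf n b \<Longrightarrow> wf n (eqE a b)" unfolding eqE_def by simp

definition leE :: "ex \<Rightarrow> ex \<Rightarrow> ex" where "leE a b = nsg (sub a b)"
lemma ev_leE[simp]: "ev fs (leE a b) e = bo (ev fs a e \<le> ev fs b e)"
  unfolding leE_def by simp
lemma wf_leE[simp]: "wf n a \<Longrightarrow> wf n b \<Longrightarrow> wf n (leE a b)" unfolding leE_def by simp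

definition ltE :: "ex \<Rightarrow> ex \<Rightarrow> ex" where "ltE a b = leE (Sc a) b"
lemma ev_ltE[simp]: "ev fs (ltE a b) e = bo (ev fs a e < ev fs b e)"
  unfolding ltE_def by simp
lemma wf_ltE[simp]: "wf n a \<Longrightarrow> wf n b \<Longrightarrow> wf n (ltE a b)" unfolding ltE_def by simp

definition andE :: "ex \<Rightarrow> ex \<Rightarrow> ex" where "andE a b = mul a b"
lemma ev_andE[simp]: "ev fs (andE a b) e = ev fs a e * ev fs b e"
  unfolding andE_def by simp
lemma wf_andE[simp]: "wf n a \<Longrightarrow> wf n b \<Longrightarrow> wf n (andE a b)" unfolding andE_def by simp

lemma bo_mult[simp]: "bo P * bo Q = bo (P \<and> Q)" by simp

definition orE :: "ex \<Rightarrow> ex \<Rightarrow> ex" where "orE a b = sg (add a b)"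
lemma ev_orE[simp]: "ev fs (orE a b) e = (if ev fs a e + ev fs b e = 0 then 0 else 1)"
  unfolding orE_def by simp
lemma wf_orE[simp]: "wf n a \<Longrightarrow> wf n b \<Longrightarrow> wf n (orE a b)" unfolding orE_def by simp

definition ite :: "ex \<Rightarrow> ex \<Rightarrow> ex \<Rightarrow> ex" where "ite c a b = add (mul (sg c) a) (mul (nsg c) b)"
lemma ev_ite[simp]: "ev fs (ite c a b) e = (if ev fs c e = 0 then ev fs b e else ev fs a e)"
  unfolding ite_def by simp
lemma wf_ite[simp]: "wf n c \<Longrightarrow> wf n a \<Longrightarrow> wf n b \<Longrightarrow> wf n (ite c a b)" unfolding ite_def by simp

fun num :: "nat \<Rightarrow> ex" where "num 0 = Zr" | "num (Suc k) = Sc (num k)"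
lemma ev_num[simp]: "ev fs (num k) e = k" by (induct k) auto
lemma wf_num[simp]: "wf n (num k)" by (induct k) auto

definition sh :: "nat \<Rightarrow> nat" where "sh i = (case i of 0 \<Rightarrow> 1 | Suc j \<Rightarrow> j + 2)"
lemma econs_sh: "(r ## k ## e) \<circ> sh = k ## e"
  by (rule ext) (auto simp: sh_def econs_def split: nat.splits)

definition bsum :: "ex \<Rightarrow> ex \<Rightarrow> ex" where "bsum p m = Pr Zr (add (Vr 0) (ren sh p)) m"
lemma ev_bsum[simp]: "ev fs (bsum p m) e = (\<Sum>i<ev fs m e. ev fs p (i ## e))"
proof -
  have "\<And>y. rec_nat 0 (\<lambda>k r. r + ev fs p (k ## e)) y = (\<Sum>i<y. ev fs p (i ## e))" by (induct_tac y) auto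
  then show ?thesis unfolding bsum_def by (simp add: ev_ren econs_sh)
qed
lemma wf_bsum[simp]: "wf (Suc n) p \<Longrightarrow> wf n m \<Longrightarrow> wf n (bsum p m)"
proof -
  assume a: "wf (Suc n) p" "wf n m"
  have "wf (Suc (Suc n)) (ren sh p)" by (rule wf_ren[OF a(1)]) (auto simp: sh_def split: nat.splits)
  then show ?thesis using a unfolding bsum_def by simp
qed

definition bex :: "ex \<Rightarrow> ex \<Rightarrow> ex" where "bex p m = sg (bsum p (Sc m))"
lemma ev_bex[simp]: "ev fs (bex p m) e = bo (\<exists>i\<le>ev fs m e. ev fs p (i ## e) \<noteq> 0)"
  unfolding bex_def by (simp add: lessThan_Suc_atMost)
lemma wf_bex[simp]: "wf (Suc n) p \<Longrightarrow> wf n m \<Longrightarrow> wf n (bex p m)" unfolding bex_def by simp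

lemma div_Suc_step: "0 < (b::nat) \<Longrightarrow> Suc k div b = k div b + (if (k div b + 1) * b \<le> Suc k then 1 else 0)"
proof -
  assume b: "0 < b"
  let ?q = "k div b"
  have m1: "k mod b < b" using b by simp
  have m2: "k = ?q * b + k mod b" by simp
  have m3: "(?q + 1) * b = ?q * b + b" by simp
  have l: "?q * b \<le> k" and u: "k < (?q + 1) * b"
    using m1 m2 m3 by linarith+
  show ?thesis
  proof (cases "(?q + 1) * b \<le> Suc k")
    case True
    then have "(?q + 1) * b = Suc k" using u by linarith
    then have "Suc k div b = ?q + 1" using b by (metis nonzero_mult_div_cancel_right less_not_refl2)
    then show ?thesis using True by simp
  next
    case False
    have l': "b * ?q \<le> k" using l by (simp add: mult.commute)
    have "Suc k div b = ?q"
    proof (rule div_nat_eqI)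
      show "b * ?q \<le> Suc k" using l' by linarith
      show "Suc k < b * Suc ?q" using False by (simp add: algebra_simps)
    qed
    then show ?thesis using False by simp
  qed
qed

definition divE :: "ex \<Rightarrow> ex \<Rightarrow> ex" where
  "divE a b = Pr Zr (add (Vr 0) (mul (sg (up2 b)) (leE (mul (Sc (Vr 0)) (up2 b)) (Sc (Vr 1))))) a"
lemma ev_divE[simp]: "ev fs (divE a b) e = ev fs a e div ev fs b e"
proof -
  have "\<And>y. rec_nat 0 (\<lambda>k r. r + (if x = 0 then 0 else 1) * (if Suc r * x \<le> Suc k then 1 else 0)) y = y div x"
    for x :: nat
  proof -
    fix y show "rec_nat 0 (\<lambda>k r. r + (if x = 0 then 0 else 1) * (if Suc r * x \<le> Suc k then 1 else 0)) y = y div x"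
    proof (induct y)
      case (Suc y) then show ?case
        by (cases "x = 0") (simp_all add: div_Suc_step)
    qed simp
  qed
  then show ?thesis unfolding divE_def by simp
qed
lemma wf_divE[simp]: "wf n a \<Longrightarrow> wf n b \<Longrightarrow> wf n (divE a b)" unfolding divE_def by simp

definition modE :: "ex \<Rightarrow> ex \<Rightarrow> ex" where "modE a b = sub a (mul (divE a b) b)"
lemma ev_modE[simp]: "ev fs (modE a b) e = ev fs a e mod ev fs b e"
  unfolding modE_def by (simp add: minus_div_mult_eq_mod)
lemma wf_modE[simp]: "wf n a \<Longrightarrow> wf n b \<Longrightarrow> wf n (modE a b)" unfolding modE_def by simp

definition tri :: "ex \<Rightarrow> ex" where "tri a = Pr Zr (add (Vr 0) (Sc (Vr 1))) a"
lemma ev_tri[simp]: "ev fs (tri a) e = triangle (ev fs a e)"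
proof -
  have "\<And>y. rec_nat 0 (\<lambda>k r. r + Suc k) y = triangle y" by (induct_tac y) auto
  then show ?thesis unfolding tri_def by simp
qed
lemma wf_tri[simp]: "wf n a \<Longrightarrow> wf n (tri a)" unfolding tri_def by simp

definition pe :: "ex \<Rightarrow> ex \<Rightarrow> ex" where "pe a b = add (tri (add a b)) a"
lemma ev_pe[simp]: "ev fs (pe a b) e = prod_encode (ev fs a e, ev fs b e)"
  unfolding pe_def by (simp add: prod_encode_def)
lemma wf_pe[simp]: "wf n a \<Longrightarrow> wf n b \<Longrightarrow> wf n (pe a b)" unfolding pe_def by simp




definition orc :: "(nat \<Rightarrow> nat) \<Rightarrow> (nat \<Rightarrow> nat) \<Rightarrow> (nat \<Rightarrow> nat) \<Rightarrow> nat \<Rightarrow> nat \<Rightarrow> nat" where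
  "orc a d chi j = (if j = 0 then a else if j = 1 then d else chi)"

definition oP :: "nat \<Rightarrow> nat" where "oP A = (if A mod 2 = 0 then A div 2 else 0)"
definition oN :: "nat \<Rightarrow> nat" where "oN A = (if A mod 2 = 0 then 0 else A div 2 + 1)"

definition omP :: "ex \<Rightarrow> ex" where "omP i = mul (nsg (modE (Fo 0 i) (num 2))) (divE (Fo 0 i) (num 2))"
definition omN :: "ex \<Rightarrow> ex" where "omN i = mul (sg (modE (Fo 0 i) (num 2))) (Sc (divE (Fo 0 i) (num 2)))"
definition omD :: "ex \<Rightarrow> ex" where "omD i = Sc (Fo 1 i)"

lemma ev_omP[simp]: "ev (orc a d chi) (omP i) e = oP (a (ev (orc a d chi) i e))"
  unfolding omP_def oP_def by (simp add: orc_def)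
lemma ev_omN[simp]: "ev (orc a d chi) (omN i) e = oN (a (ev (orc a d chi) i e))"
  unfolding omN_def oN_def by (simp add: orc_def)
lemma ev_omD[simp]: "ev (orc a d chi) (omD i) e = Suc (d (ev (orc a d chi) i e))"
  unfolding omD_def by (simp add: orc_def)
lemma wf_om[simp]: "wf n i \<Longrightarrow> wf n (omP i)" "wf n i \<Longrightarrow> wf n (omN i)" "wf n i \<Longrightarrow> wf n (omD i)"
  unfolding omP_def omN_def omD_def by simp_all

definition bitm :: "nat \<Rightarrow> nat \<Rightarrow> nat \<Rightarrow> nat \<Rightarrow> nat" where
  "bitm i XP XN XD = ((XP + 2 * (XN * XD) - XN) * 2 ^ Suc i div XD) mod 2"

definition bitx :: "ex \<Rightarrow> ex \<Rightarrow> ex \<Rightarrow> ex \<Rightarrow> ex" where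
  "bitx i XP XN XD = modE (divE (mul (sub (add XP (mul (num 2) (mul XN XD))) XN) (pw2 (Sc i))) XD) (num 2)"

lemma ev_bitx[simp]: "ev fs (bitx i XP XN XD) e = bitm (ev fs i e) (ev fs XP e) (ev fs XN e) (ev fs XD e)"
  unfolding bitx_def bitm_def by simp
lemma wf_bitx[simp]: "wf n i \<Longrightarrow> wf n XP \<Longrightarrow> wf n XN \<Longrightarrow> wf n XD \<Longrightarrow> wf n (bitx i XP XN XD)"
  unfolding bitx_def by simp

definition Gm :: "(nat \<Rightarrow> nat) \<Rightarrow> nat \<Rightarrow> nat \<Rightarrow> nat \<Rightarrow> nat \<Rightarrow> nat \<Rightarrow> nat" where
  "Gm chi K XP XN XD t = rec_nat 0 (\<lambda>t r. if chi (K - t - 1) = 0 then r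
       else Suc (prod_encode (bitm (K - t - 1) XP XN XD, r))) t"

definition Gx :: "ex \<Rightarrow> ex \<Rightarrow> ex \<Rightarrow> ex \<Rightarrow> ex" where
  "Gx K XP XN XD = Pr Zr (ite (Fo 2 (sub (sub (up2 K) (Vr 1)) (num 1)))
      (Sc (pe (bitx (sub (sub (up2 K) (Vr 1)) (num 1)) (up2 XP) (up2 XN) (up2 XD)) (Vr 0))) (Vr 0)) K"

lemma ev_Gx[simp]: "ev (orc a d chi) (Gx K XP XN XD) e =
   Gm chi (ev (orc a d chi) K e) (ev (orc a d chi) XP e) (ev (orc a d chi) XN e) (ev (orc a d chi) XD e) (ev (orc a d chi) K e)"
  unfolding Gx_def Gm_def by (simp add: orc_def cong: if_cong)
lemma wf_Gx[simp]: "wf n K \<Longrightarrow> wf n XP \<Longrightarrow> wf n XN \<Longrightarrow> wf n XD \<Longrightarrow> wf n (Gx K XP XN XD)"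
  unfolding Gx_def by simp

definition PhiM :: "(nat \<Rightarrow> nat) \<Rightarrow> (nat \<Rightarrow> nat) \<Rightarrow> (nat \<Rightarrow> nat) \<Rightarrow> nat \<Rightarrow> nat \<Rightarrow> nat \<Rightarrow> nat \<Rightarrow> nat \<Rightarrow> nat \<Rightarrow> bool" where
  "PhiM a d chi K j s c n x \<longleftrightarrow>
    (let Ps = oP (a s); Ns = oN (a s); Ds = Suc (d s); Pn = oP (a n); Nn = oN (a n); Dn = Suc (d n);
         Nq = (Ps * Dn + Nn * Ds) - (Pn * Ds + Ns * Dn); Dq = Ds * Dn in
     x = prod_encode (n, c) \<and> Pn * Ds + Ns * Dn < Ps * Dn + Nn * Ds \<and>
     Dq < Nq * 2 ^ Suc K \<and> (K = 0 \<or> Nq * 2 ^ K \<le> Dq) \<and>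
     c = Gm chi K (Ps * 2 ^ K + j * Ds) (Ns * 2 ^ K) (Ds * 2 ^ K) K)"

definition Phix :: ex where
  "Phix = (let K = Vr 0; j = Vr (Suc (0)); s = Vr (Suc (Suc (0))); c = Vr (Suc (Suc (Suc (0)))); n = Vr (Suc (Suc (Suc (Suc (0))))); x = Vr (Suc (Suc (Suc (Suc (Suc (Suc (0)))))));
      Nq = sub (add (mul (omP s) (omD n)) (mul (omN n) (omD s))) (add (mul (omP n) (omD s)) (mul (omN s) (omD n)));
      Dq = mul (omD s) (omD n) in
    andE (eqE x (pe n c))
    (andE (ltE (add (mul (omP n) (omD s)) (mul (omN s) (omD n))) (add (mul (omP s) (omD n)) (mul (omN n) (omD s))))
    (andE (andE (ltE Dq (mul Nq (pw2 (Sc K)))) (orE (eqE K Zr) (leE (mul Nq (pw2 K)) Dq)))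
     (eqE c (Gx K (add (mul (omP s) (pw2 K)) (mul j (omD s))) (mul (omN s) (pw2 K)) (mul (omD s) (pw2 K)))))))"

lemma wf_Phix: "wf 7 Phix" unfolding Phix_def Let_def by simp

lemma ev_orE'[simp]: "ev fs (orE a b) e = bo (ev fs a e \<noteq> 0 \<or> ev fs b e \<noteq> 0)"
  by simp
lemma econs_1: "(a ## e) 1 = e 0" by (simp add: econs_def)
lemma bo_eq: "(bo P = bo Q) = (P = Q)" by simp
lemma bo_ne0: "(bo P \<noteq> 0) = P" by simp

lemma ev_Phix: "ev (orc a d chi) Phix (K ## j ## s ## c ## n ## y ## x ## z) = bo (PhiM a d chi K j s c n x)"
  unfolding Phix_def Let_def
  apply (simp only: ev_andE ev_eqE ev_ltE ev_leE ev_orE' ev_Gx ev_add ev_sub ev_mul ev_pw2 ev.simps ev_omP ev_omN ev_omD ev_pe bo_ne0 bo_mult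
      econs_0 econs_Suc econs_1)
  apply (simp only: PhiM_def Let_def bo_eq conj_assoc)
  done

definition Ex :: ex where
  "Ex = nsg (bex (bex (bex (bex (bex Phix (Vr (Suc (Suc (Suc (Suc (0))))))) (num 1)) (Vr (Suc (Suc (0))))) (Vr (Suc (Suc (0))))) (Vr (Suc (0))))"

lemma wf_Ex: "wf 2 Ex" unfolding Ex_def using wf_Phix by (simp add: numeral_eq_Suc)

lemma ev_Ex: "ev (orc a d chi) Ex (y ## x ## z) =
  bo (\<not> (\<exists>n\<le>x. \<exists>c\<le>x. \<exists>s\<le>y. \<exists>j\<le>1. \<exists>K\<le>y. PhiM a d chi K j s c n x))"
  unfolding Ex_def
  apply (simp only: ev_nsg ev_bex ev_Phix bo_ne0 ev.simps econs_0 econs_Suc ev_num)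
  apply (simp only: bo_eq)
  apply simp
  done

lemma W_ce:
  assumes "computable_fun a" "computable_fun d" "computable_fun chi"
  shows "ce_set {x. \<exists>n c s j K. j \<le> 1 \<and> PhiM a d chi K j s c n x}"
proof -
  have cf: "\<And>j. computable_fun (orc a d chi j)" using assms by (simp add: orc_def)
  have "{x. \<exists>y. ev (orc a d chi) Ex (y ## x ## (\<lambda>_. 0)) = 0} = {x. \<exists>n c s j K. j \<le> 1 \<and> PhiM a d chi K j s c n x}"
  proof (rule set_eqI, rule iffI)
    fix x assume "x \<in> {x. \<exists>y. ev (orc a d chi) Ex (y ## x ## (\<lambda>_. 0)) = 0}"
    then show "x \<in> {x. \<exists>n c s j K. j \<le> 1 \<and> PhiM a d chi K j s c n x}"
      by (auto simp: ev_Ex split: if_splits) blast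
  next
    fix x assume "x \<in> {x. \<exists>n c s j K. j \<le> 1 \<and> PhiM a d chi K j s c n x}"
    then obtain n c s j K where h: "j \<le> 1" "PhiM a d chi K j s c n x" by blast
    then have "x = prod_encode (n, c)" unfolding PhiM_def Let_def by simp
    then have nx: "n \<le> x" and cx: "c \<le> x" by (simp_all add: le_prod_encode_1 le_prod_encode_2)
    have "\<exists>n\<le>x. \<exists>c\<le>x. \<exists>s'\<le>max s K. \<exists>j\<le>1. \<exists>K'\<le>max s K. PhiM a d chi K' j s' c n x"
      using h nx cx max.cobounded1[of s K] max.cobounded2[of K s] by blast
    then have "ev (orc a d chi) Ex (max s K ## x ## (\<lambda>_. 0)) = 0"
      by (simp only: ev_Ex) simp
    then show "x \<in> {x. \<exists>y. ev (orc a d chi) Ex (y ## x ## (\<lambda>_. 0)) = 0}" by blast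
  qed
  then show ?thesis using ce_from_ex[of "orc a d chi", OF cf wf_Ex] by simp
qed




lemma int_decode_oPN: "real_of_int (int_decode A) = real (oP A) - real (oN A)"
  unfolding int_decode_def sum_decode_def oP_def oN_def
  by (auto simp: even_iff_mod_2_eq_zero split: sum.splits)

lemma log_floor_char:
  assumes q: "0 < (q::real)"
  shows "nat \<lfloor>- log 2 q\<rfloor> = K \<longleftrightarrow> 1 < q * 2 ^ Suc K \<and> (K = 0 \<or> q * 2 ^ K \<le> 1)"
proof -
  have lm: "\<And>m::nat. log 2 (q * 2 ^ m) = log 2 q + m"
    using q by (simp add: log_mult log_nat_power)
  have A: "1 < q * 2 ^ Suc K \<longleftrightarrow> - log 2 q < Suc K"
  proof -
    have "1 < q * 2 ^ Suc K \<longleftrightarrow> 0 < log 2 (q * 2 ^ Suc K)"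
      using q by (subst zero_less_log_cancel_iff) auto
    then show ?thesis using lm[of "Suc K"] by linarith
  qed
  have B: "q * 2 ^ K \<le> 1 \<longleftrightarrow> K \<le> - log 2 q"
  proof -
    have "q * 2 ^ K \<le> 1 \<longleftrightarrow> log 2 (q * 2 ^ K) \<le> 0"
      using q by (subst log_le_zero_cancel_iff) auto
    then show ?thesis using lm[of K] by linarith
  qed
  have C: "nat \<lfloor>- log 2 q\<rfloor> = K \<longleftrightarrow> - log 2 q < Suc K \<and> (K = 0 \<or> K \<le> - log 2 q)"
  proof (cases K)
    case 0 then show ?thesis by (auto simp: floor_less_iff)
  next
    case (Suc k)
    then show ?thesis
      by (auto simp: nat_eq_iff le_floor_iff floor_less_iff) (linarith+)
  qed
  show ?thesis unfolding A B C ..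
qed

definition code01 :: "bool \<Rightarrow> nat" where "code01 b = (if b then 1 else 0)"

lemma code_str_Cons: "code_str (b # \<sigma>) = Suc (prod_encode (code01 b, code_str \<sigma>))"
  by (simp add: code_str_def code01_def)
lemma code_str_Nil: "code_str [] = 0" by (simp add: code_str_def)

definition sig :: "nat set \<Rightarrow> real \<Rightarrow> nat \<Rightarrow> bool list" where
  "sig R x K = map (real_bits x) (filter (\<lambda>i. i \<in> R) [0..<K])"

lemma bitm_real:
  assumes "0 < XD"
  shows "bitm i XP XN XD = code01 (real_bits ((real XP - real XN) / real XD) i)"
proof -
  define y where "y = (real XP - real XN) / real XD"
  define num where "num = XP + 2 * (XN * XD) - XN"
  have XNle: "XN \<le> 2 * (XN * XD)" using assms by (simp add: mult_le_cancel1 )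
  have XNle2: "XN \<le> XP + 2 * (XN * XD)" using XNle by linarith
  have rnum: "real num = real XP - real XN + 2 * real XN * real XD"
    unfolding num_def using XNle2 by (simp add: of_nat_diff)
  have "real num * 2 ^ Suc i / real XD = y * 2 ^ Suc i + of_int (2 * int XN * 2 ^ Suc i)"
    unfolding y_def rnum using assms by (simp add: field_simps)
  then have "\<lfloor>real num * 2 ^ Suc i / real XD\<rfloor> = \<lfloor>y * 2 ^ Suc i\<rfloor> + 2 * int XN * 2 ^ Suc i"
    by (metis floor_add_int)
  moreover have "\<lfloor>real num * 2 ^ Suc i / real XD\<rfloor> = int (num * 2 ^ Suc i div XD)"
    using floor_divide_of_nat_eq[of "num * 2 ^ Suc i" XD] by simp
  ultimately have E: "int (num * 2 ^ Suc i div XD) = \<lfloor>y * 2 ^ Suc i\<rfloor> + 2 * (int XN * 2 ^ Suc i)"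
    by simp
  have "odd (num * 2 ^ Suc i div XD) \<longleftrightarrow> odd \<lfloor>y * 2 ^ Suc i\<rfloor>"
  proof -
    have "odd (int (num * 2 ^ Suc i div XD)) \<longleftrightarrow> odd \<lfloor>y * 2 ^ Suc i\<rfloor>" unfolding E by simp
    then show ?thesis by simp
  qed
  then show ?thesis unfolding bitm_def code01_def real_bits_def y_def num_def
    by (auto simp: odd_iff_mod_2_eq_one)
qed

lemma Gm_code:
  assumes XD: "0 < XD"
  shows "t \<le> K \<Longrightarrow> Gm (\<lambda>i. if i \<in> R then 1 else 0) K XP XN XD t = code_str (map (real_bits ((real XP - real XN) / real XD)) (filter (\<lambda>i. i \<in> R) [K - t..<K]))"
proof (induction t)
  case 0 then show ?case by (simp add: Gm_def code_str_Nil)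
next
  case (Suc t)
  have eq: "[K - Suc t..<K] = (K - Suc t) # [K - t..<K]"
    using Suc.prems by (simp add: upt_conv_Cons Suc_diff_Suc)
  let ?chi = "\<lambda>i. if i \<in> R then 1 else 0::nat"
  have "Gm ?chi K XP XN XD (Suc t) = (if ?chi (K - t - 1) = 0 then Gm ?chi K XP XN XD t
       else Suc (prod_encode (bitm (K - t - 1) XP XN XD, Gm ?chi K XP XN XD t)))"
    by (simp add: Gm_def)
  then show ?case using Suc by (auto simp: eq bitm_real[OF XD] code_str_Cons)
qed




lemma PhiM_iff:
  assumes Om: "\<And>s. Om s = real_of_int (int_decode (a s)) / real (Suc (d s))"
  shows "PhiM a d (\<lambda>i. if i \<in> R then 1 else 0) K j s c n x \<longleftrightarrow>
    x = prod_encode (n, c) \<and> Om n < Om s \<and> K = k_stage Om n s \<and>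
    c = code_str (sig R (Om s + real j / 2 ^ K) K)"
proof -
  define Ps where "Ps = oP (a s)"
  define Ns where "Ns = oN (a s)"
  define Ds where "Ds = Suc (d s)"
  define Pn where "Pn = oP (a n)"
  define Nn where "Nn = oN (a n)"
  define Dn where "Dn = Suc (d n)"
  define Nq where "Nq = (Ps * Dn + Nn * Ds) - (Pn * Ds + Ns * Dn)"
  define Dq where "Dq = Ds * Dn"
  have Oms: "Om s = (real Ps - real Ns) / real Ds" unfolding Om Ps_def Ns_def Ds_def int_decode_oPN ..
  have Omn: "Om n = (real Pn - real Nn) / real Dn" unfolding Om Pn_def Nn_def Dn_def int_decode_oPN ..
  have Ds0: "0 < Ds" and Dn0: "0 < Dn" by (simp_all add: Ds_def Dn_def)
  have lt: "Pn * Ds + Ns * Dn < Ps * Dn + Nn * Ds \<longleftrightarrow> Om n < Om s"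
  proof -
    have "Om n < Om s \<longleftrightarrow> (real Pn - real Nn) * real Ds < (real Ps - real Ns) * real Dn"
      unfolding Oms Omn using Ds0 Dn0 by (simp add: divide_less_eq less_divide_eq field_simps)
    also have "\<dots> \<longleftrightarrow> real (Pn * Ds + Ns * Dn) < real (Ps * Dn + Nn * Ds)"
      by (simp add: algebra_simps)
    finally show ?thesis by (simp only: of_nat_less_iff)
  qed
  have main: "Om n < Om s \<Longrightarrow> (Dq < Nq * 2 ^ Suc K \<and> (K = 0 \<or> Nq * 2 ^ K \<le> Dq)) \<longleftrightarrow> K = k_stage Om n s"
  proof -
    assume l: "Om n < Om s"
    then have l': "Pn * Ds + Ns * Dn < Ps * Dn + Nn * Ds" using lt by simp
    have rNq: "real Nq = real (Ps * Dn + Nn * Ds) - real (Pn * Ds + Ns * Dn)"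
      unfolding Nq_def using l' by (simp add: of_nat_diff)
    have q: "Om s - Om n = real Nq / real Dq"
      unfolding Oms Omn rNq Dq_def using Ds0 Dn0 by (simp add: field_simps)
    have qpos: "0 < Om s - Om n" using l by simp
    have Dq0: "0 < Dq" using Ds0 Dn0 by (simp add: Dq_def)
    have e1: "\<And>m. Dq < Nq * 2 ^ m \<longleftrightarrow> 1 < (Om s - Om n) * 2 ^ m"
    proof -
      fix m :: nat
      have "Dq < Nq * 2 ^ m \<longleftrightarrow> real Dq < real Nq * 2 ^ m" by (metis of_nat_less_iff of_nat_mult of_nat_numeral of_nat_power)
      also have "\<dots> \<longleftrightarrow> 1 < (Om s - Om n) * 2 ^ m" unfolding q using Dq0 by (simp add: field_simps)
      finally show "Dq < Nq * 2 ^ m \<longleftrightarrow> 1 < (Om s - Om n) * 2 ^ m" .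
    qed
    have e2: "\<And>m. Nq * 2 ^ m \<le> Dq \<longleftrightarrow> (Om s - Om n) * 2 ^ m \<le> 1"
    proof -
      fix m :: nat
      have "Nq * 2 ^ m \<le> Dq \<longleftrightarrow> real Nq * 2 ^ m \<le> real Dq" by (metis of_nat_le_iff of_nat_mult of_nat_numeral of_nat_power)
      also have "\<dots> \<longleftrightarrow> (Om s - Om n) * 2 ^ m \<le> 1" unfolding q using Dq0 by (simp add: field_simps)
      finally show "Nq * 2 ^ m \<le> Dq \<longleftrightarrow> (Om s - Om n) * 2 ^ m \<le> 1" .
    qed
    show ?thesis unfolding e1 e2 k_stage_def using log_floor_char[OF qpos, of K] by auto
  qed
  have G: "Gm (\<lambda>i. if i \<in> R then 1 else 0) K (Ps * 2 ^ K + j * Ds) (Ns * 2 ^ K) (Ds * 2 ^ K) K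
      = code_str (sig R (Om s + real j / 2 ^ K) K)"
  proof -
    have "(real (Ps * 2 ^ K + j * Ds) - real (Ns * 2 ^ K)) / real (Ds * 2 ^ K) = Om s + real j / 2 ^ K"
      unfolding Oms using Ds0 by (simp add: field_simps)
    then show ?thesis using Gm_code[of "Ds * 2 ^ K" K K R "Ps * 2 ^ K + j * Ds" "Ns * 2 ^ K"] Ds0
      by (simp add: sig_def)
  qed
  have U: "PhiM a d (\<lambda>i. if i \<in> R then 1 else 0) K j s c n x \<longleftrightarrow>
     (x = prod_encode (n, c) \<and> Pn * Ds + Ns * Dn < Ps * Dn + Nn * Ds \<and>
     Dq < Nq * 2 ^ Suc K \<and> (K = 0 \<or> Nq * 2 ^ K \<le> Dq) \<and>
     c = code_str (sig R (Om s + real j / 2 ^ K) K))"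
    unfolding PhiM_def Let_def Ps_def[symmetric] Ns_def[symmetric] Ds_def[symmetric]
      Pn_def[symmetric] Nn_def[symmetric] Dn_def[symmetric] Nq_def[symmetric] Dq_def[symmetric] G ..
  show ?thesis unfolding U using lt main by (cases "Om n < Om s") (auto simp del: power_Suc)
qed




lemma card_enum: "infinite (R::nat set) \<Longrightarrow> card (R \<inter> {..<enumerate R m}) = m"
proof (induction m)
  case 0
  have "R \<inter> {..<enumerate R 0} = {}"
    by (auto simp: enumerate_0 dest: not_less_Least)
  then show ?case by simp
next
  case (Suc m)
  have "R \<inter> {..<enumerate R (Suc m)} = insert (enumerate R m) (R \<inter> {..<enumerate R m})"
  proof (rule set_eqI, rule iffI)
    fix y assume y: "y \<in> R \<inter> {..<enumerate R (Suc m)}"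
    show "y \<in> insert (enumerate R m) (R \<inter> {..<enumerate R m})"
    proof (rule ccontr)
      assume "\<not> ?thesis"
      with y have "enumerate R m < y" "y \<in> R" by auto
      then have "enumerate R (Suc m) \<le> y"
        unfolding enumerate_Suc''[OF Suc.prems] by (intro Least_le) auto
      with y show False by auto
    qed
  next
    fix y assume "y \<in> insert (enumerate R m) (R \<inter> {..<enumerate R m})"
    then show "y \<in> R \<inter> {..<enumerate R (Suc m)}"
      using enumerate_in_set[OF Suc.prems] enumerate_step[OF Suc.prems, of m] by auto
  qed
  moreover have "finite (R \<inter> {..<enumerate R m})" by (rule finite_Int) simp
  ultimately show ?case using Suc by (simp add: card_insert_if)
qed

lemma enum_lt_iff: "infinite (R::nat set) \<Longrightarrow> m < card (R \<inter> {..<K}) \<longleftrightarrow> enumerate R m < K"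
proof
  assume R: "infinite R" and m: "m < card (R \<inter> {..<K})"
  show "enumerate R m < K"
  proof (rule ccontr)
    assume "\<not> enumerate R m < K"
    then have "R \<inter> {..<K} \<subseteq> R \<inter> {..<enumerate R m}" by auto
    then have "card (R \<inter> {..<K}) \<le> card (R \<inter> {..<enumerate R m})"
      by (intro card_mono) (rule finite_Int, simp)
    then have "card (R \<inter> {..<K}) \<le> m" using card_enum[OF R, of m] by simp
    with m show False by simp
  qed
next
  assume R: "infinite R" and e: "enumerate R m < K"
  have "insert (enumerate R m) (R \<inter> {..<enumerate R m}) \<subseteq> R \<inter> {..<K}"
    using e enumerate_in_set[OF R] by auto
  then have "card (insert (enumerate R m) (R \<inter> {..<enumerate R m})) \<le> card (R \<inter> {..<K})"
    by (intro card_mono) (rule finite_Int, simp)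
  then show "m < card (R \<inter> {..<K})" using card_enum[OF R, of m] by simp
qed

lemma filter_enum: "infinite (R::nat set) \<Longrightarrow> filter (\<lambda>i. i \<in> R) [0..<K] = map (enumerate R) [0..<card (R \<inter> {..<K})]"
proof (induction K)
  case 0 then show ?case by simp
next
  case (Suc K)
  show ?case
  proof (cases "K \<in> R")
    case True
    obtain m where m: "enumerate R m = K" using enumerate_Ex[OF Suc.prems True] by blast
    have c: "card (R \<inter> {..<K}) = m" using card_enum[OF Suc.prems, of m] m by simp
    have "R \<inter> {..<Suc K} = insert K (R \<inter> {..<K})" using True by auto
    then have "card (R \<inter> {..<Suc K}) = Suc m" using c by simp
    then show ?thesis using Suc True c m by simp
  next
    case False
    have "R \<inter> {..<Suc K} = R \<inter> {..<K}" using False by (auto simp: less_Suc_eq)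
    then show ?thesis using Suc False by simp
  qed
qed

lemma cyl_sig: assumes R: "infinite (R::nat set)"
  shows "Y \<in> cylinder (sig R x K) \<longleftrightarrow> (\<forall>m. enumerate R m < K \<longrightarrow> Y m = real_bits x (enumerate R m))"
proof -
  have "Y \<in> cylinder (sig R x K) \<longleftrightarrow> (\<forall>m<card (R \<inter> {..<K}). Y m = real_bits x (enumerate R m))"
    unfolding cylinder_def sig_def filter_enum[OF R] by simp
  then show ?thesis using enum_lt_iff[OF R] by blast
qed

lemma bits_floor:
  assumes i: "i < K" and f: "\<lfloor>x * 2 ^ K\<rfloor> = \<lfloor>y * 2 ^ K\<rfloor>"
  shows "real_bits x i = real_bits y i"
proof -
  have g: "\<lfloor>z * 2 ^ Suc i\<rfloor> = \<lfloor>z * 2 ^ K\<rfloor> div 2 ^ (K - Suc i)" for z :: real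
  proof -
    have p: "(2::real) ^ K = 2 ^ (K - Suc i) * 2 ^ Suc i"
      using i by (simp only: power_add[symmetric]) simp
    have "z * 2 ^ Suc i = z * 2 ^ K / 2 ^ (K - Suc i)"
      unfolding p by simp
    then have "z * 2 ^ Suc i = z * 2 ^ K / real_of_int (2 ^ (K - Suc i))" by simp
    then show ?thesis using floor_divide_real_eq_div[of "2 ^ (K - Suc i)" "z * 2 ^ K"] by simp
  qed
  show ?thesis unfolding real_bits_def g f ..
qed

lemma floor_two_choice:
  assumes "x0 \<le> z" "z < x0 + 1 / 2 ^ K"
  shows "\<exists>j::nat. j \<le> 1 \<and> \<lfloor>z * 2 ^ K\<rfloor> = \<lfloor>(x0 + real j / 2 ^ K) * 2 ^ K\<rfloor>"
proof -
  have p: "(0::real) < 2 ^ K" by simp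
  have a: "x0 * 2 ^ K \<le> z * 2 ^ K" "z * 2 ^ K < x0 * 2 ^ K + 1"
    using assms p by (auto simp: field_simps)
  have e1: "(x0 + real 1 / 2 ^ K) * 2 ^ K = x0 * 2 ^ K + 1" by (simp add: field_simps)
  have e0: "(x0 + real 0 / 2 ^ K) * 2 ^ K = x0 * 2 ^ K" by simp
  have "\<lfloor>z * 2 ^ K\<rfloor> = \<lfloor>x0 * 2 ^ K\<rfloor> \<or> \<lfloor>z * 2 ^ K\<rfloor> = \<lfloor>x0 * 2 ^ K + 1\<rfloor>"
    using a by linarith
  then show ?thesis using e0 e1 by (metis le_numeral_extra(4) zero_le)
qed

lemma cyl_meas:
  "{Y::nat\<Rightarrow>bool. \<forall>m<r. Y m = b m} \<in> sets cantor_measure \<and>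
   emeasure cantor_measure {Y. \<forall>m<r. Y m = b m} = ennreal ((1/2) ^ r)"
proof -
  let ?M = "\<lambda>_::nat. measure_pmf (bernoulli_pmf (1/2))"
  have eq: "{Y::nat\<Rightarrow>bool. \<forall>m<r. Y m = b m} = prod_emb UNIV ?M {..<r} (\<Pi>\<^sub>E m\<in>{..<r}. {b m})"
  proof (rule set_eqI)
    fix Y :: "nat \<Rightarrow> bool"
    have "restrict Y {..<r} \<in> (\<Pi>\<^sub>E m\<in>{..<r}. {b m}) \<longleftrightarrow> (\<forall>m<r. Y m = b m)"
      by (simp add: PiE_iff) (meson lessThan_iff)
    moreover have "Y \<in> extensional UNIV" by (simp add: extensional_def)
    ultimately show "Y \<in> {Y. \<forall>m<r. Y m = b m} \<longleftrightarrow> Y \<in> prod_emb UNIV ?M {..<r} (\<Pi>\<^sub>E m\<in>{..<r}. {b m})"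
      by (simp add: prod_emb_iff)
  qed
  have s: "prod_emb UNIV ?M {..<r} (\<Pi>\<^sub>E m\<in>{..<r}. {b m}) \<in> sets (Pi\<^sub>M UNIV ?M)"
    by (rule sets_PiM_I) auto
  have "emeasure (Pi\<^sub>M UNIV ?M) (prod_emb UNIV ?M {..<r} (\<Pi>\<^sub>E m\<in>{..<r}. {b m})) = (\<Prod>i\<in>{..<r}. emeasure (?M i) {b i})"
    by (rule emeasure_PiM_emb) (auto simp: prob_space_measure_pmf)
  also have "\<dots> = (\<Prod>i\<in>{..<r}. ennreal (1/2))" by (simp add: emeasure_pmf_single)
  also have "\<dots> = ennreal (1/2) ^ r" by simp
  also have "\<dots> = ennreal ((1/2) ^ r)" by (rule ennreal_power) simp
  finally show ?thesis using s unfolding eq cantor_measure_def by simp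
qed




lemma kstage_mono_s:
  assumes "Om n < Om s" "Om s \<le> Om s'"
  shows "k_stage Om n s' \<le> k_stage Om n s"
proof -
  have "- log 2 (Om s' - Om n) \<le> - log 2 (Om s - Om n)" using assms by simp
  then show ?thesis unfolding k_stage_def by (intro nat_mono floor_mono)
qed

lemma kstage_mono_n:
  assumes "Om n \<le> Om n'" "Om n' < Om s"
  shows "k_stage Om n s \<le> k_stage Om n' s"
proof -
  have "- log 2 (Om s - Om n) \<le> - log 2 (Om s - Om n')" using assms by simp
  then show ?thesis unfolding k_stage_def by (intro nat_mono floor_mono)
qed

lemma klim_le:
  assumes "Om n < Om s" "Om s \<le> \<Omega>"
  shows "k_lim \<Omega> Om n \<le> k_stage Om n s"
proof -
  have "- log 2 (\<Omega> - Om n) \<le> - log 2 (Om s - Om n)" using assms by simp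
  then show ?thesis unfolding k_stage_def k_lim_def by (intro nat_mono floor_mono)
qed

lemma kstage_bound:
  assumes "Om n < Om s"
  shows "k_stage Om n s = 0 \<or> (Om s - Om n) * 2 ^ k_stage Om n s \<le> 1"
  using log_floor_char[of "Om s - Om n" "k_stage Om n s"] assms unfolding k_stage_def by auto

definition Vset :: "(nat \<Rightarrow> real) \<Rightarrow> nat set \<Rightarrow> nat \<Rightarrow> (nat \<Rightarrow> bool) set" where
  "Vset Om R n = \<Union> {cylinder (sig R (Om s + real j / 2 ^ k_stage Om n s) (k_stage Om n s)) | s j. j \<le> (1::nat) \<and> Om n < Om s}"

lemma capture:
  assumes inc: "incseq Om" and lim: "Om \<longlonglongrightarrow> \<Omega>" and lt: "\<And>n. Om n < \<Omega>" and R: "infinite R"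
  shows "restrict_seq R (real_bits \<Omega>) \<in> Vset Om R n"
proof -
  have le: "\<And>s. Om s \<le> \<Omega>" using incseq_le[OF inc lim] by blast
  have "eventually (\<lambda>s. Om n < Om s) sequentially"
    using lim lt[of n] by (rule order_tendstoD)
  then obtain s1 where s1: "Om n < Om s1" by (auto dest: eventually_happens)
  define K1 where "K1 = k_stage Om n s1"
  have "eventually (\<lambda>s. \<Omega> - 1 / 2 ^ K1 < Om s) sequentially"
    using lim by (rule order_tendstoD) simp
  then obtain s2 where s2: "\<And>s. s \<ge> s2 \<Longrightarrow> \<Omega> - 1 / 2 ^ K1 < Om s" by (auto simp: eventually_sequentially)
  define s where "s = max s1 s2"
  have ss1: "Om s1 \<le> Om s" using inc unfolding s_def by (simp add: incseq_def)
  have sn: "Om n < Om s" using s1 ss1 by simp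
  define K where "K = k_stage Om n s"
  have KK1: "K \<le> K1" unfolding K_def K1_def by (rule kstage_mono_s[OF s1 ss1])
  have "1 / (2::real) ^ K1 \<le> 1 / 2 ^ K" using KK1 by (simp add: frac_le power_increasing)
  then have close: "\<Omega> < Om s + 1 / 2 ^ K" using s2[of s] by (simp add: s_def)
  obtain j :: nat where j: "j \<le> 1" "\<lfloor>\<Omega> * 2 ^ K\<rfloor> = \<lfloor>(Om s + real j / 2 ^ K) * 2 ^ K\<rfloor>"
    using floor_two_choice[OF le[of s] close] by blast
  have "restrict_seq R (real_bits \<Omega>) \<in> cylinder (sig R (Om s + real j / 2 ^ K) K)"
    unfolding cyl_sig[OF R] restrict_seq_def using bits_floor[OF _ j(2)] by blast
  then show ?thesis unfolding Vset_def K_def using j(1) sn by blast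
qed

lemma Vset_dec:
  assumes inc: "incseq Om" and R: "infinite R"
  shows "Vset Om R (Suc n) \<subseteq> Vset Om R n"
proof
  fix Y assume "Y \<in> Vset Om R (Suc n)"
  then obtain s j where j: "j \<le> (1::nat)" and sn: "Om (Suc n) < Om s"
    and Y: "Y \<in> cylinder (sig R (Om s + real j / 2 ^ k_stage Om (Suc n) s) (k_stage Om (Suc n) s))"
    unfolding Vset_def by blast
  define K' where "K' = k_stage Om (Suc n) s"
  define K where "K = k_stage Om n s"
  have nn: "Om n \<le> Om (Suc n)" using inc by (simp add: incseq_SucD)
  have sn0: "Om n < Om s" using nn sn by simp
  have KK: "K \<le> K'" unfolding K_def K'_def by (rule kstage_mono_n[OF nn sn])
  obtain j' :: nat where j': "j' \<le> 1" "\<lfloor>(Om s + real j / 2 ^ K') * 2 ^ K\<rfloor> = \<lfloor>(Om s + real j' / 2 ^ K) * 2 ^ K\<rfloor>"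
  proof (cases "K = K'")
    case True then show ?thesis using that[of j] j by simp
  next
    case False
    then have "K < K'" using KK by simp
    then have "real j / 2 ^ K' < 1 / 2 ^ K" using j
      by (cases j) (auto simp: divide_strict_left_mono power_strict_increasing)
    then have "Om s + real j / 2 ^ K' < Om s + 1 / 2 ^ K" by simp
    moreover have "Om s \<le> Om s + real j / 2 ^ K'" by simp
    ultimately show ?thesis using floor_two_choice that by blast
  qed
  have "Y \<in> cylinder (sig R (Om s + real j' / 2 ^ K) K)"
    unfolding cyl_sig[OF R]
  proof (intro allI impI)
    fix m assume m: "enumerate R m < K"
    then have "Y m = real_bits (Om s + real j / 2 ^ K') (enumerate R m)"
      using Y KK unfolding cyl_sig[OF R] K'_def by auto
    also have "\<dots> = real_bits (Om s + real j' / 2 ^ K) (enumerate R m)"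
      by (rule bits_floor[OF m j'(2)])
    finally show "Y m = real_bits (Om s + real j' / 2 ^ K) (enumerate R m)" .
  qed
  then show "Y \<in> Vset Om R n" unfolding Vset_def K_def using j'(1) sn0 by blast
qed




definition a_r :: "nat set \<Rightarrow> nat \<Rightarrow> nat" where "a_r R r = Suc (enumerate R (r - 1))"

definition Cz :: "nat set \<Rightarrow> nat \<Rightarrow> int \<Rightarrow> (nat \<Rightarrow> bool) set" where
  "Cz R r z = {Y. \<forall>m<r. Y m = real_bits (of_int z / 2 ^ a_r R r) (enumerate R m)}"

definition Bset :: "(nat \<Rightarrow> real) \<Rightarrow> nat set \<Rightarrow> nat \<Rightarrow> nat \<Rightarrow> (nat \<Rightarrow> bool) set" where
  "Bset Om R n r = (let z0 = \<lfloor>Om n * 2 ^ a_r R r\<rfloor> in Cz R r z0 \<union> Cz R r (z0 + 1) \<union> Cz R r (z0 + 2))"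

lemma Cz_meas: "Cz R r z \<in> sets cantor_measure" "emeasure cantor_measure (Cz R r z) = ennreal ((1/2) ^ r)"
  unfolding Cz_def using cyl_meas by auto

lemma Bset_meas: "Bset Om R n r \<in> sets cantor_measure"
  "emeasure cantor_measure (Bset Om R n r) \<le> ennreal (3 * (1/2) ^ r)"
proof -
  let ?z0 = "\<lfloor>Om n * 2 ^ a_r R r\<rfloor>"
  show "Bset Om R n r \<in> sets cantor_measure" unfolding Bset_def Let_def using Cz_meas(1) by auto
  have "emeasure cantor_measure (Bset Om R n r) \<le>
     emeasure cantor_measure (Cz R r ?z0 \<union> Cz R r (?z0 + 1)) + emeasure cantor_measure (Cz R r (?z0 + 2))"
    unfolding Bset_def Let_def by (rule emeasure_subadditive) (use Cz_meas(1) in auto)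
  also have "\<dots> \<le> (emeasure cantor_measure (Cz R r ?z0) + emeasure cantor_measure (Cz R r (?z0 + 1)))
     + emeasure cantor_measure (Cz R r (?z0 + 2))"
    by (intro add_mono emeasure_subadditive Cz_meas(1) order_refl)
  also have "\<dots> = ennreal ((1/2) ^ r) + ennreal ((1/2) ^ r) + ennreal ((1/2) ^ r)"
    by (simp add: Cz_meas(2))
  also have "\<dots> = ennreal (3 * (1/2) ^ r)"
    by (simp add: ennreal_plus[symmetric] del: ennreal_plus)
  finally show "emeasure cantor_measure (Bset Om R n r) \<le> ennreal (3 * (1/2) ^ r)" .
qed

lemma cyl_in_Bset:
  assumes R: "infinite R" and sn: "Om n < Om s" and j: "j \<le> (1::nat)"
  shows "cylinder (sig R (Om s + real j / 2 ^ k_stage Om n s) (k_stage Om n s))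
     \<subseteq> Bset Om R n (card (R \<inter> {..<k_stage Om n s}))"
proof
  define K where "K = k_stage Om n s"
  define r where "r = card (R \<inter> {..<K})"
  define x where "x = Om s + real j / 2 ^ K"
  define a where "a = a_r R r"
  define z0 where "z0 = \<lfloor>Om n * 2 ^ a\<rfloor>"
  fix Y assume "Y \<in> cylinder (sig R (Om s + real j / 2 ^ k_stage Om n s) (k_stage Om n s))"
  then have Y: "\<And>m. enumerate R m < K \<Longrightarrow> Y m = real_bits x (enumerate R m)"
    unfolding cyl_sig[OF R] K_def x_def by blast
  have B: "Bset Om R n (card (R \<inter> {..<k_stage Om n s})) = Cz R r z0 \<union> Cz R r (z0 + 1) \<union> Cz R r (z0 + 2)"
    unfolding Bset_def Let_def r_def K_def z0_def a_def ..
  show "Y \<in> Bset Om R n (card (R \<inter> {..<k_stage Om n s}))"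
  proof (cases "r = 0")
    case True then show ?thesis unfolding B Cz_def by simp
  next
    case False
    have eK: "enumerate R (r - 1) < K" using enum_lt_iff[OF R, of "r - 1" K] False unfolding r_def by simp
    have aK: "a \<le> K" using eK unfolding a_def a_r_def by simp
    have K0: "K \<noteq> 0" using eK by simp
    have bnd: "(Om s - Om n) * 2 ^ K \<le> 1" using kstage_bound[OF sn] K0 unfolding K_def by simp
    have pK: "(0::real) < 2 ^ K" by simp
    have d1: "Om s - Om n \<le> 1 / 2 ^ K" using bnd pK by (simp add: field_simps)
    have d2: "real j / 2 ^ K \<le> 1 / 2 ^ K" using j by (simp add: divide_right_mono)
    have aK2: "1 / (2::real) ^ K \<le> 1 / 2 ^ a" using aK by (simp add: frac_le power_increasing)
    have xu: "x \<le> Om n + 2 / 2 ^ a" unfolding x_def using d1 d2 aK2 by simp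
    have "0 \<le> real j / 2 ^ K" by simp
    then have xl: "Om n < x" unfolding x_def using sn by linarith
    have pa: "(0::real) < 2 ^ a" by simp
    have xu': "x * 2 ^ a \<le> Om n * 2 ^ a + 2" using xu pa by (simp add: field_simps)
    have xl': "Om n * 2 ^ a < x * 2 ^ a" using xl pa by simp
    define z where "z = \<lfloor>x * 2 ^ a\<rfloor>"
    have zr: "z = z0 \<or> z = z0 + 1 \<or> z = z0 + 2"
    proof -
      have "z0 \<le> z" unfolding z_def z0_def using xl' by (intro floor_mono) simp
      moreover have "z \<le> \<lfloor>Om n * 2 ^ a + 2\<rfloor>" unfolding z_def using xu' by (intro floor_mono)
      moreover have "\<lfloor>Om n * 2 ^ a + 2\<rfloor> = z0 + 2" unfolding z0_def by simp
      ultimately show ?thesis by linarith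
    qed
    have zf: "\<lfloor>x * 2 ^ a\<rfloor> = \<lfloor>(of_int z / 2 ^ a) * 2 ^ a\<rfloor>" unfolding z_def by simp
    have "Y \<in> Cz R r z"
      unfolding Cz_def a_def[symmetric]
    proof (intro CollectI allI impI)
      fix m assume m: "m < r"
      have emK: "enumerate R m < K" using enum_lt_iff[OF R] m unfolding r_def by blast
      have "enumerate R m \<le> enumerate R (r - 1)" using m R by simp
      then have ema: "enumerate R m < a" unfolding a_def a_r_def by simp
      show "Y m = real_bits (of_int z / 2 ^ a) (enumerate R m)"
        using Y[OF emK] bits_floor[OF ema zf] by simp
    qed
    then show ?thesis unfolding B using zr by auto
  qed
qed

lemma Vset_meas:
  assumes inc: "incseq Om" and lim: "Om \<longlonglongrightarrow> \<Omega>" and R: "infinite R"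
  shows "emeasure cantor_measure (Vset Om R n) \<le> ennreal (6 * cost_lim \<Omega> Om R n)"
proof -
  have le: "\<And>s. Om s \<le> \<Omega>" using incseq_le[OF inc lim] by blast
  define rn where "rn = card (R \<inter> {..<k_lim \<Omega> Om n})"
  have sub: "Vset Om R n \<subseteq> (\<Union>r. Bset Om R n (r + rn))"
  proof
    fix Y assume "Y \<in> Vset Om R n"
    then obtain s j where j: "j \<le> (1::nat)" and sn: "Om n < Om s"
      and Y: "Y \<in> cylinder (sig R (Om s + real j / 2 ^ k_stage Om n s) (k_stage Om n s))"
      unfolding Vset_def by blast
    have "k_lim \<Omega> Om n \<le> k_stage Om n s" by (rule klim_le[OF sn le])
    then have "R \<inter> {..<k_lim \<Omega> Om n} \<subseteq> R \<inter> {..<k_stage Om n s}" by auto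
    then have "rn \<le> card (R \<inter> {..<k_stage Om n s})" unfolding rn_def
      by (intro card_mono) (rule finite_Int, simp)
    then obtain r where r: "card (R \<inter> {..<k_stage Om n s}) = r + rn" using le_Suc_ex by (metis add.commute)
    show "Y \<in> (\<Union>r. Bset Om R n (r + rn))" using cyl_in_Bset[OF R sn j] Y r by auto
  qed
  have "emeasure cantor_measure (Vset Om R n) \<le> emeasure cantor_measure (\<Union>r. Bset Om R n (r + rn))"
    by (rule emeasure_mono[OF sub]) (use Bset_meas(1) in auto)
  also have "\<dots> \<le> (\<Sum>r. emeasure cantor_measure (Bset Om R n (r + rn)))"
    by (rule emeasure_subadditive_countably) (use Bset_meas(1) in auto)
  also have "\<dots> \<le> (\<Sum>r. ennreal (3 * (1/2) ^ (r + rn)))"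
    by (intro suminf_le Bset_meas(2)) auto
  also have "\<dots> = ennreal (\<Sum>r. 3 * (1/2) ^ (r + rn))"
    by (rule suminf_ennreal2) (auto intro!: summable_mult summable_geometric simp: power_add mult.commute[of _ "(1/2)^rn"])
  also have "(\<Sum>r. 3 * (1/2::real) ^ (r + rn)) = 6 * (1/2) ^ rn"
  proof -
    have "(\<Sum>r. 3 * (1/2::real) ^ (r + rn)) = (\<Sum>r. (3 * (1/2) ^ rn) * (1/2) ^ r)"
      by (simp add: power_add mult_ac)
    also have "\<dots> = (3 * (1/2) ^ rn) * (\<Sum>r. (1/2::real) ^ r)"
      by (rule suminf_mult) (rule summable_geometric, simp)
    also have "\<dots> = 6 * (1/2) ^ rn" by (simp add: suminf_geometric)
    finally show ?thesis .
  qed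
  finally show ?thesis unfolding cost_lim_def rn_def by simp
qed




lemma code_str_inj: "code_str \<sigma> = code_str \<tau> \<longleftrightarrow> \<sigma> = \<tau>"
proof -
  have "inj (\<lambda>b::bool. if b then 1 else (0::nat))" by (rule injI) (auto split: if_splits)
  then show ?thesis unfolding code_str_def list_encode_eq by (simp add: inj_map_eq_map)
qed

lemma main_case:
  assumes rat: "computable_rat_seq Om" and inc: "incseq Om" and lim: "Om \<longlonglongrightarrow> \<Omega>"
    and lt: "\<And>n. Om n < \<Omega>" and R: "infinite R" and cR: "computable_set R"
  shows "\<exists>Vr. bounded_test (cost_lim \<Omega> Om R) Vr \<and> captured_by (restrict_seq R (real_bits \<Omega>)) Vr"
proof -
  obtain a d where ca: "computable_fun a" and cd: "computable_fun d"
    and Om: "\<And>s. Om s = real_of_int (int_decode (a s)) / real (Suc (d s))"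
    using rat unfolding computable_rat_seq_def by blast
  define chi where "chi = (\<lambda>i. if i \<in> R then 1 else (0::nat))"
  have cchi: "computable_fun chi" using cR unfolding computable_set_def chi_def .
  define W where "W = {x. \<exists>n c s j K. j \<le> 1 \<and> PhiM a d chi K j s c n x}"
  have ceW: "ce_set W" unfolding W_def by (rule W_ce[OF ca cd cchi])
  have memW: "\<And>n \<sigma>. prod_encode (n, code_str \<sigma>) \<in> W \<longleftrightarrow>
      (\<exists>s j. j \<le> (1::nat) \<and> Om n < Om s \<and> \<sigma> = sig R (Om s + real j / 2 ^ k_stage Om n s) (k_stage Om n s))"
    unfolding W_def chi_def PhiM_iff[OF Om] by (auto simp: code_str_inj)
  have Veq: "\<And>n. Vset Om R n = \<Union> {cylinder \<sigma> | \<sigma>. prod_encode (n, code_str \<sigma>) \<in> W}"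
    unfolding Vset_def memW by blast
  have uc: "unif_ce_open (Vset Om R)" unfolding unif_ce_open_def using ceW Veq by blast
  have dec: "decseq (Vset Om R)" by (rule decseq_SucI) (rule Vset_dec[OF inc R])
  have meas: "\<And>n. emeasure cantor_measure (Vset Om R n) \<le> ennreal (6 * cost_lim \<Omega> Om R n)"
    by (rule Vset_meas[OF inc lim R])
  have cap: "captured_by (restrict_seq R (real_bits \<Omega>)) (Vset Om R)"
    unfolding captured_by_def using capture[OF inc lim lt R] by blast
  show ?thesis unfolding bounded_test_def using uc dec meas cap by blast
qed

definition E0 :: ex where "E0 = nsg (bex (eqE (Vr (Suc (Suc 0))) (pe (Vr 0) Zr)) (Vr (Suc 0)))"

lemma W0_ce:
  fixes fs :: "nat \<Rightarrow> nat \<Rightarrow> nat"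
  assumes "\<And>j. computable_fun (fs j)"
  shows "ce_set {x. \<exists>n. x = prod_encode (n, 0)}"
proof -
  have w: "wf 2 E0" unfolding E0_def by (simp add: numeral_eq_Suc)
  have ev: "\<And>y x z. ev fs E0 (y ## x ## z) = bo (\<not> (\<exists>n\<le>x. x = prod_encode (n, 0)))"
    unfolding E0_def by (simp only: ev_nsg ev_bex ev_eqE ev_pe ev.simps econs_0 econs_Suc bo_ne0) simp
  have "{x. \<exists>y. ev fs E0 (y ## x ## (\<lambda>_. 0)) = 0} = {x. \<exists>n. x = prod_encode (n, 0)}"
  proof -
    have "\<And>x. (\<exists>n\<le>x. x = prod_encode (n, 0)) \<longleftrightarrow> (\<exists>n. x = prod_encode (n, 0))"
      using le_prod_encode_1 by blast
    then show ?thesis unfolding ev by simp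
  qed
  then show ?thesis using ce_from_ex[of fs, OF assms w] by simp
qed

lemma cost_pos: "0 < cost_lim \<Omega> Om R n" unfolding cost_lim_def by simp

lemma trivial_case:
  assumes inc: "incseq Om" and lim: "Om \<longlonglongrightarrow> \<Omega>" and N: "\<not> Om N < \<Omega>"
    and cf: "\<exists>f. computable_fun f"
  shows "\<exists>Vr. bounded_test (cost_lim \<Omega> Om R) Vr \<and> captured_by (restrict_seq R (real_bits \<Omega>)) Vr"
proof -
  obtain f where f: "computable_fun f" using cf by blast
  have le: "\<And>s. Om s \<le> \<Omega>" using incseq_le[OF inc lim] by blast
  have ON: "Om N = \<Omega>" using le[of N] N by simp
  have Oge: "\<And>n. N \<le> n \<Longrightarrow> Om n = \<Omega>" using le ON inc by (metis antisym incseq_def)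
  define c where "c = cost_lim \<Omega> Om R"
  have ceq: "\<And>n. N \<le> n \<Longrightarrow> c n = c N" unfolding c_def cost_lim_def k_lim_def using Oge ON by simp
  define C where "C = (\<Sum>m\<le>N. 1 / c m)"
  have cp: "\<And>m. 0 < c m" unfolding c_def by (rule cost_pos)
  have CN: "\<And>n. n \<le> N \<Longrightarrow> 1 / c n \<le> C"
    unfolding C_def using cp by (intro member_le_sum) (auto intro: less_imp_le)
  have Cb: "\<And>n. 1 \<le> C * c n"
  proof -
    fix n
    have "1 / c n \<le> C"
      using CN[of n] CN[of N] ceq[of n] by (cases "n \<le> N") auto
    then show "1 \<le> C * c n" using cp[of n] by (simp add: field_simps)
  qed
  define W where "W = {x. \<exists>n. x = prod_encode (n, 0)}"
  have ceW: "ce_set W" unfolding W_def by (rule W0_ce[of "\<lambda>_. f"]) (rule f)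
  have Veq: "\<And>n. (UNIV :: (nat \<Rightarrow> bool) set) = \<Union> {cylinder \<sigma> | \<sigma>. prod_encode (n, code_str \<sigma>) \<in> W}"
  proof -
    fix n
    have "prod_encode (n, code_str []) \<in> W" unfolding W_def code_str_Nil by blast
    moreover have "cylinder [] = UNIV" unfolding cylinder_def by simp
    ultimately show "(UNIV :: (nat \<Rightarrow> bool) set) = \<Union> {cylinder \<sigma> | \<sigma>. prod_encode (n, code_str \<sigma>) \<in> W}"
      by blast
  qed
  have uc: "unif_ce_open (\<lambda>_. UNIV)" unfolding unif_ce_open_def using ceW Veq by blast
  have U1: "emeasure cantor_measure UNIV = 1"
    using cyl_meas[of 0 "\<lambda>_. True"] by simp
  have meas: "\<And>n. emeasure cantor_measure UNIV \<le> ennreal (C * c n)"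
    unfolding U1 using Cb by (simp add: ennreal_leI[of 1, simplified])
  show ?thesis unfolding bounded_test_def captured_by_def c_def[symmetric]
    using uc meas by (intro exI[of _ "\<lambda>_. UNIV"]) (auto simp: decseq_def)
qed

theorem proposition5p4:
  fixes \<Omega> :: real and Om :: "nat \<Rightarrow> real" and R :: "nat set"
  assumes "0 < \<Omega>" and "\<Omega> < 1"
    and "computable_rat_seq Om" and "incseq Om" and "Om \<longlonglongrightarrow> \<Omega>"
    and "ml_random (real_bits \<Omega>)"
    and "infinite R" and "computable_set R"
  shows "\<exists>V. bounded_test (cost_lim \<Omega> Om R) V \<and> captured_by (restrict_seq R (real_bits \<Omega>)) V"
proof (cases "\<forall>n. Om n < \<Omega>")
  case True
  then show ?thesis using main_case[OF assms(3,4,5) _ assms(7,8)] by blast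
next
  case False
  then obtain N where "\<not> Om N < \<Omega>" by blast
  moreover have "\<exists>f. computable_fun f" using assms(8) unfolding computable_set_def by blast
  ultimately show ?thesis using trivial_case[OF assms(4,5)] by blast
qed

end
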